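(* Let $N\ge 2$ and $R\ge 3$. For every deterministic online algorithm for routing in the Clos network $C_{N,R}$, there is a sequence of flows, each with demand $1$ (and satisfying the demand assumption below), for which the routing returned by the algorithm has congestion at least $2$.
   Context: Clos network $C_{N,R}$: a directed graph with $N$ middle switches $M_1,\dots,M_N$, $R$ input switches $I_1,\dots,I_R$, $R$ output switches $O_1,\dots,O_R$, source servers $s_i^k$ and destination servers $t_i^k$ ($i\in[R]$, $k\in[N]$), and edges $s_i^kI_i$, $I_iM_m$, $M_mO_i$, $O_it_i^k$ for all $i\in[R]$, $m,k\in[N]$; all links have capacity $1$. A flow $f$ has a source server $s(f)$ of input switch $I_{i(f)}$, a destination server $t(f)$ of output switch $O_{j(f)}$, and a positive demand $\mathrm{dem}(f)$; a set of flows must have total demand at most $1$ leaving each source server and entering each destination server (so with unit demands, at most one flow per source server and per destination server). A routing $r$ assigns each flow a single middle switch $r(f)\in[N]$; its congestion is $\max_{i\in[R],m\in[N]}\max\{\sum_{f:i(f)=i,r(f)=m}\mathrm{dem}(f),\ \sum_{f:j(f)=i,r(f)=m}\mathrm{dem}(f)\}$. A deterministic online algorithm receives flows one at a time and must irrevocably assign each flow a middle switch before seeing the next; formally it defines a routing for every sequence of flows such that for every prefix $P$ of a sequence $F$, the routing of $P$ when given $P$ equals the routing of $P$ when given $F$. *)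

theory Defs
  imports Main
begin

text \<open>Clos network C_{N,R}, with 0-based indices: input/output switches i < R,
middle switches m < N, servers indexed by (switch, k) with k < N.
A unit-demand flow is given by its source server (i, k) (server s_i^k of input
switch I_i) and its destination server (j, l) (server t_j^l of output switch O_j).\<close>

type_synonym flow = "(nat \<times> nat) \<times> (nat \<times> nat)"

definition in_switch :: "flow \<Rightarrow> nat" where
  "in_switch f = fst (fst f)"

definition out_switch :: "flow \<Rightarrow> nat" where
  "out_switch f = fst (snd f)"

definition valid_flows :: "nat \<Rightarrow> nat \<Rightarrow> flow list \<Rightarrow> bool" where
  "valid_flows N R F \<longleftrightarrow>
     (\<forall>f\<in>set F. fst (fst f) < R \<and> snd (fst f) < N \<and> fst (snd f) < R \<and> snd (snd f) < N)
     \<and> distinct (map fst F) \<and> distinct (map snd F)"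

text \<open>A routing of a flow sequence F is a list r of middle switches, r ! p being
the middle switch of the p-th flow. Congestion with unit demands.\<close>

definition congestion :: "nat \<Rightarrow> nat \<Rightarrow> flow list \<Rightarrow> nat list \<Rightarrow> nat" where
  "congestion N R F r =
     Max {max (card {p. p < length F \<and> in_switch (F ! p) = i \<and> r ! p = m})
              (card {p. p < length F \<and> out_switch (F ! p) = i \<and> r ! p = m})
          | i m. i < R \<and> m < N}"

text \<open>A deterministic online algorithm: assigns a routing to every (valid) flow
sequence, such that the routing of each prefix is the restriction of the routing
of the whole sequence.\<close>

definition online_algorithm :: "nat \<Rightarrow> nat \<Rightarrow> (flow list \<Rightarrow> nat list) \<Rightarrow> bool" where
  "online_algorithm N R A \<longleftrightarrow>
     (\<forall>F. valid_flows N R F \<longrightarrow>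
        length (A F) = length F \<and> (\<forall>m\<in>set (A F). m < N) \<and>
        (\<forall>n. A (take n F) = take n (A F)))"

end

theory Submission
  imports Defs
begin

lemma cong_ge2_aux:
  assumes "p < length F" "q < length F" "p \<noteq> q"
    and "P (F!p)" "P (F!q)" "r!p = m" "r!q = m"
  shows "2 \<le> card {x. x < length F \<and> P (F ! x) \<and> r ! x = m}"
proof -
  have "{p,q} \<subseteq> {x. x < length F \<and> P (F ! x) \<and> r ! x = m}" using assms by auto
  moreover have "finite {x. x < length F \<and> P (F ! x) \<and> r ! x = m}" by simp
  ultimately have "card {p,q} \<le> card {x. x < length F \<and> P (F ! x) \<and> r ! x = m}"
    by (rule card_mono[rotated])
  thus ?thesis using assms(3) by simp
qed

lemma cong_ge:
  assumes "i < R" "m < N"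
  shows "max (card {p. p < length F \<and> in_switch (F ! p) = i \<and> r ! p = m})
              (card {p. p < length F \<and> out_switch (F ! p) = i \<and> r ! p = m})
         \<le> congestion N R F r"
proof -
  let ?g = "\<lambda>(i,m). max (card {p. p < length F \<and> in_switch (F ! p) = i \<and> r ! p = m})
              (card {p. p < length F \<and> out_switch (F ! p) = i \<and> r ! p = m})"
  have eq: "{max (card {p. p < length F \<and> in_switch (F ! p) = i \<and> r ! p = m})
              (card {p. p < length F \<and> out_switch (F ! p) = i \<and> r ! p = m})
          | i m. i < R \<and> m < N} = ?g ` ({..<R} \<times> {..<N})" by auto
  have "finite (?g ` ({..<R} \<times> {..<N}))" by simp
  moreover have "?g (i,m) \<in> ?g ` ({..<R} \<times> {..<N})" using assms by auto
  ultimately show ?thesis unfolding congestion_def eq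
    by (metis (no_types, lifting) Max_ge case_prod_conv)
qed

lemma conflict_in:
  assumes "p < length F" "q < length F" "p \<noteq> q"
    "in_switch (F!p) = in_switch (F!q)" "r!p = r!q" "in_switch (F!p) < R" "r!p < N"
  shows "2 \<le> congestion N R F r"
proof -
  have "2 \<le> card {x. x < length F \<and> in_switch (F ! x) = in_switch (F!p) \<and> r ! x = r!p}"
    using assms by (intro cong_ge2_aux[of p F q]) auto
  also have "\<dots> \<le> congestion N R F r"
    using cong_ge[OF assms(6,7), of F r] by linarith
  finally show ?thesis .
qed

lemma conflict_out:
  assumes "p < length F" "q < length F" "p \<noteq> q"
    "out_switch (F!p) = out_switch (F!q)" "r!p = r!q" "out_switch (F!p) < R" "r!p < N"
  shows "2 \<le> congestion N R F r"
proof -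
  have "2 \<le> card {x. x < length F \<and> out_switch (F ! x) = out_switch (F!p) \<and> r ! x = r!p}"
    using assms by (intro cong_ge2_aux[of p F q]) auto
  also have "\<dots> \<le> congestion N R F r"
    using cong_ge[OF assms(6,7), of F r] by linarith
  finally show ?thesis .
qed

theorem mainTheorem5:
  fixes N R :: nat and A :: "flow list \<Rightarrow> nat list"
  assumes "N \<ge> 2" and "R \<ge> 3" and "online_algorithm N R A"
  shows "\<exists>F. valid_flows N R F \<and> congestion N R F (A F) \<ge> 2"
proof (rule ccontr)
  assume H: "\<not> ?thesis"
  have alg: "\<And>F. valid_flows N R F \<Longrightarrow> length (A F) = length F \<and> (\<forall>m\<in>set (A F). m < N) \<and>
        (\<forall>n. A (take n F) = take n (A F))"
    using assms(3) unfolding online_algorithm_def by blast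
  have noin: "False" if v: "valid_flows N R F" and "p < length F" "q < length F" "p \<noteq> q"
     "in_switch (F!p) = in_switch (F!q)" "A F ! p = A F ! q" for F p q
  proof -
    have "in_switch (F!p) < R" using v \<open>p < length F\<close> unfolding valid_flows_def in_switch_def
      using nth_mem by blast
    moreover have "A F ! p < N" using alg[OF v] \<open>p < length F\<close> by (metis nth_mem)
    ultimately have "2 \<le> congestion N R F (A F)" by (rule conflict_in[OF that(2,3,4,5,6)])
    thus False using H v by blast
  qed
  have noout: "False" if v: "valid_flows N R F" and "p < length F" "q < length F" "p \<noteq> q"
     "out_switch (F!p) = out_switch (F!q)" "A F ! p = A F ! q" for F p q
  proof -
    have "out_switch (F!p) < R" using v \<open>p < length F\<close> unfolding valid_flows_def out_switch_def
      using nth_mem by blast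
    moreover have "A F ! p < N" using alg[OF v] \<open>p < length F\<close> by (metis nth_mem)
    ultimately have "2 \<le> congestion N R F (A F)" by (rule conflict_out[OF that(2,3,4,5,6)])
    thus False using H v by blast
  qed
  define n where "n = N - 1"
  have nN: "N = Suc n" "n \<ge> 1" using assms(1) n_def by auto
  define F1 :: "flow list" where "F1 = map (\<lambda>k. ((0,k),(1,k))) [0..<n] @ map (\<lambda>k. ((1,k),(2,k))) [0..<n]"
  have lenF1: "length F1 = 2*n" unfolding F1_def by simp
  have F1a: "k < n \<Longrightarrow> F1 ! k = ((0,k),(1,k))" for k unfolding F1_def by (simp add: nth_append)
  have F1b: "k < n \<Longrightarrow> F1 ! (n+k) = ((1,k),(2,k))" for k unfolding F1_def by (simp add: nth_append)
  have vF1: "valid_flows N R F1" using assms(2) nN unfolding valid_flows_def F1_def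
    by (auto simp: distinct_map inj_on_def)
  define r where "r = A F1"
  have pre: "A (F1 @ G) ! j = r ! j" if "valid_flows N R (F1 @ G)" "j < 2*n" for G j
  proof -
    have "A (take (length F1) (F1 @ G)) = take (length F1) (A (F1 @ G))" using alg[OF that(1)] by blast
    thus ?thesis using that(2) lenF1 unfolding r_def by simp
  qed
  define S1 where "S1 = (\<lambda>k. r!k) ` {..<n}"
  define S2 where "S2 = (\<lambda>k. r!(n+k)) ` {..<n}"
  have lr: "length r = 2*n" using alg[OF vF1] lenF1 r_def by simp
  have rN: "j < 2*n \<Longrightarrow> r!j < N" for j using alg[OF vF1] lr r_def by (metis nth_mem)
  have cS1: "card S1 = n" unfolding S1_def
  proof (subst card_image)
    show "inj_on (\<lambda>k. r ! k) {..<n}"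
    proof (rule inj_onI, rule ccontr)
      fix x y assume "x \<in> {..<n}" "y \<in> {..<n}" "r!x = r!y" "x \<noteq> y"
      thus False using noin[OF vF1, of x y] lenF1 F1a r_def by (auto simp: in_switch_def)
    qed
  qed simp
  have cS2: "card S2 = n" unfolding S2_def
  proof (subst card_image)
    show "inj_on (\<lambda>k. r ! (n+k)) {..<n}"
    proof (rule inj_onI, rule ccontr)
      fix x y assume "x \<in> {..<n}" "y \<in> {..<n}" "r!(n+x) = r!(n+y)" "x \<noteq> y"
      thus False using noin[OF vF1, of "n+x" "n+y"] lenF1 F1b r_def by (auto simp: in_switch_def)
    qed
  qed simp
  have S1N: "S1 \<subseteq> {..<N}" unfolding S1_def using rN by auto
  have S2N: "S2 \<subseteq> {..<N}" unfolding S2_def using rN by auto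
  show False
  proof (cases "S1 = S2")
    case False
    define F where "F = F1 @ [((0,n),(2,n))]"
    have vF: "valid_flows N R F" using assms(2) nN unfolding valid_flows_def F_def F1_def
      by (auto simp: distinct_map inj_on_def)
    define c where "c = A F ! (2*n)"
    have lF: "length F = 2*n+1" using lenF1 F_def by simp
    have Fl: "F ! (2*n) = ((0,n),(2,n))" using lenF1 F_def by (simp add: nth_append)
    have cN: "c < N" using alg[OF vF] lF c_def by (metis less_add_one nth_mem)
    have "c \<notin> S1"
    proof
      assume "c \<in> S1"
      then obtain k where k: "k < n" "r!k = c" unfolding S1_def by auto
      have "A F ! k = c" using pre[OF vF[unfolded F_def], of k] k unfolding F_def by simp
      thus False using noin[OF vF, of k "2*n"] k lF Fl c_def
        by (auto simp: in_switch_def F_def nth_append lenF1 F1a)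
    qed
    have "c \<notin> S2"
    proof
      assume "c \<in> S2"
      then obtain k where k: "k < n" "r!(n+k) = c" unfolding S2_def by auto
      have "A F ! (n+k) = c" using pre[OF vF[unfolded F_def], of "n+k"] k unfolding F_def by simp
      thus False using noout[OF vF, of "n+k" "2*n"] k lF Fl c_def
        by (auto simp: out_switch_def F_def nth_append lenF1 F1b)
    qed
    have cd: "card ({..<N} - {c}) = n" using cN nN by simp
    have "S1 = {..<N} - {c}" using S1N \<open>c \<notin> S1\<close> cS1 cd
      by (intro card_subset_eq) auto
    moreover have "S2 = {..<N} - {c}" using S2N \<open>c \<notin> S2\<close> cS2 cd
      by (intro card_subset_eq) auto
    ultimately show False using False by simp
  next
    case True
    define F where "F = F1 @ [((0,n),(0,0)), ((1,n),(0,1))]"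
    have vF: "valid_flows N R F" using assms(2) nN unfolding valid_flows_def F_def F1_def
      by (auto simp: distinct_map inj_on_def)
    define a where "a = A F ! (2*n)"
    define b where "b = A F ! (2*n+1)"
    have lF: "length F = 2*n+2" using lenF1 F_def by simp
    have Fa: "F ! (2*n) = ((0,n),(0,0))" using lenF1 F_def by (simp add: nth_append)
    have Fb: "F ! (2*n+1) = ((1,n),(0,1))" using lenF1 F_def by (simp add: nth_append)
    have aN: "a < N" using alg[OF vF] lF a_def nth_mem[of "2*n" "A F"] by simp
    have bN: "b < N" using alg[OF vF] lF b_def nth_mem[of "2*n+1" "A F"] by simp
    have "a \<notin> S1"
    proof
      assume "a \<in> S1"
      then obtain k where k: "k < n" "r!k = a" unfolding S1_def by auto
      have "A F ! k = a" using pre[OF vF[unfolded F_def], of k] k unfolding F_def by simp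
      thus False using noin[OF vF, of k "2*n"] k lF Fa a_def
        by (auto simp: in_switch_def F_def nth_append lenF1 F1a)
    qed
    have "b \<notin> S2"
    proof
      assume "b \<in> S2"
      then obtain k where k: "k < n" "r!(n+k) = b" unfolding S2_def by auto
      have "A F ! (n+k) = b" using pre[OF vF[unfolded F_def], of "n+k"] k unfolding F_def by simp
      thus False using noin[OF vF, of "n+k" "2*n+1"] k lF Fb b_def
        by (auto simp: in_switch_def F_def nth_append lenF1 F1b)
    qed
    have "a \<noteq> b"
    proof
      assume "a = b"
      thus False using noout[OF vF, of "2*n" "2*n+1"] lF Fa Fb a_def b_def
        by (auto simp: out_switch_def)
    qed
    have "S1 \<subseteq> {..<N} - {a,b}" using S1N \<open>a \<notin> S1\<close> \<open>b \<notin> S2\<close> True by auto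
    hence "card S1 \<le> card ({..<N} - {a,b})" by (intro card_mono) auto
    also have "\<dots> = N - 2" using aN bN \<open>a \<noteq> b\<close> by (simp add: card_Diff_subset)
    finally show False using cS1 nN by simp
  qed
qed

end
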